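(* Consider the system $\dot X=(1-Y)X$, $\dot Y=(X-U)Y$ on $\{X>0,Y>0\}$ with arbitrary input $U$, and let $V(X,Y)=\Psi(1/X)+\Psi(Y/X)$. Then along solutions $\dot V=L(X,Y)+G(X,Y)U$ with $$L(X,Y)=\frac{-(X-1)^2+Y(Y-X)}{X},\qquad G(X,Y)=\frac{X-Y}{X},$$ and for every $(X,Y)$ with $X>0$, $Y>0$, $(X,Y)\neq(1,1)$, there exists $U>0$ such that $L(X,Y)+G(X,Y)U<0$. In particular, whenever $G(X,Y)\ge 0$ and $(X,Y)\ne(1,1)$, one has $L(X,Y)<0$. Thus $V$ is a global control Lyapunov function on $\{X>0,Y>0\}$ with inputs restricted to $U>0$.
   Context: $\Psi(S)=S-1-\ln S$ for $S>0$. *)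

theory Defs
  imports "HOL-Analysis.Analysis"
begin

definition Psi :: "real \<Rightarrow> real" where
  "Psi S = S - 1 - ln S"

definition Vf :: "real \<Rightarrow> real \<Rightarrow> real" where
  "Vf x y = Psi (1 / x) + Psi (y / x)"

definition Lf :: "real \<Rightarrow> real \<Rightarrow> real" where
  "Lf x y = (- ((x - 1)^2) + y * (y - x)) / x"

definition Gf :: "real \<Rightarrow> real \<Rightarrow> real" where
  "Gf x y = (x - y) / x"

text \<open>Global control Lyapunov function for a control-affine scalar-input system
  on the open domain D with equilibrium e and admissible inputs A, where the
  derivative of V along solutions is L z + G z * u: V is continuous on D,
  positive definite with respect to e, proper on D (compact sublevel sets),
  and at every state z \<noteq> e some admissible input makes the derivative negative.\<close>
definition global_clf ::
  "((real \<times> real) \<Rightarrow> real) \<Rightarrow> ((real \<times> real) \<Rightarrow> real) \<Rightarrow> ((real \<times> real) \<Rightarrow> real)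
    \<Rightarrow> (real \<times> real) set \<Rightarrow> (real \<times> real) \<Rightarrow> real set \<Rightarrow> bool" where
  "global_clf V L G D e A \<longleftrightarrow>
     e \<in> D \<and> continuous_on D V \<and> V e = 0 \<and> (\<forall>z\<in>D. z \<noteq> e \<longrightarrow> V z > 0) \<and>
     (\<forall>c. compact {z \<in> D. V z \<le> c}) \<and>
     (\<forall>z\<in>D. z \<noteq> e \<longrightarrow> (\<exists>u\<in>A. L z + G z * u < 0))"

end

theory Submission
  imports Defs
begin

lemma Psi_nonneg: "S > 0 \<Longrightarrow> Psi S \<ge> 0"
  using ln_le_minus_one[of S] by (simp add: Psi_def)

lemma Psi_zero: "S > 0 \<Longrightarrow> Psi S = 0 \<Longrightarrow> S = 1"
  using ln_eq_minus_one[of S] by (simp add: Psi_def)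

lemma Psi_lower: assumes "S > 0" "Psi S \<le> c" shows "exp (-1 - c) \<le> S"
proof -
  have "-1 - c \<le> ln S" using assms by (simp add: Psi_def)
  hence "exp (-1 - c) \<le> exp (ln S)" by simp
  thus ?thesis using assms by simp
qed

lemma Psi_upper: assumes "S > 0" "Psi S \<le> c" shows "S \<le> 2 * (c + 1)"
proof -
  have "ln (S/2) \<le> S/2 - 1" using assms by (intro ln_le_minus_one) simp
  moreover have "ln (S/2) = ln S - ln 2" using assms by (simp add: ln_div)
  ultimately have "ln S < S/2" using ln_2_less_1 by linarith
  thus ?thesis using assms by (simp add: Psi_def)
qed

lemma deriv_part:
  fixes X Y U :: "real \<Rightarrow> real" and t :: real
  assumes px: "X t > 0" and py: "Y t > 0"
    and dx: "(X has_real_derivative ((1 - Y t) * X t)) (at t)"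
    and dy: "(Y has_real_derivative ((X t - U t) * Y t)) (at t)"
  shows "((\<lambda>s. Vf (X s) (Y s)) has_real_derivative
          (Lf (X t) (Y t) + Gf (X t) (Y t) * U t)) (at t)"
  unfolding Vf_def Psi_def
  using px py
  by (auto intro!: derivative_eq_intros dx dy simp: Lf_def Gf_def field_simps power2_eq_square)

lemma exists_part:
  fixes x y :: real
  assumes "x > 0" "y > 0" "(x, y) \<noteq> (1, 1)"
  shows "\<exists>u > 0. Lf x y + Gf x y * u < 0"
proof (cases "x < y")
  case True
  define u where "u = (y * (y - x) + 1) / (y - x)"
  have "x * y < y * y" using True assms by (simp add: mult_strict_right_mono)
  hence "y * (y - x) + 1 > 0" by (simp add: algebra_simps)
  hence u: "u > 0" using True unfolding u_def by simp
  have "Lf x y + Gf x y * u = (- ((x - 1)^2) + y * (y - x) + (x - y) * u) / x"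
    using assms unfolding Lf_def Gf_def by (simp add: field_simps)
  also have "(x - y) * u = - (y * (y - x) + 1)" using True unfolding u_def by (simp add: field_simps)
  finally have "Lf x y + Gf x y * u = (- ((x - 1)^2) - 1) / x" by simp
  also have "\<dots> < 0" using assms zero_le_power2[of "x-1"] by (intro divide_neg_pos) linarith+
  finally show ?thesis using u by blast
next
  case False
  have L: "Lf x y < 0"
  proof (cases "x = y")
    case True
    then have "x \<noteq> 1" using assms by auto
    then have "(x-1)^2 > 0" by simp
    then show ?thesis using True assms unfolding Lf_def by (simp add: divide_neg_pos)
  next
    case False2: False
    then have "y * (y - x) < 0" using False assms by (simp add: mult_pos_neg)
    then show ?thesis using assms unfolding Lf_def
      using zero_le_power2[of "x-1"] by (intro divide_neg_pos) linarith+
  qed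
  have G: "Gf x y \<ge> 0" using False assms unfolding Gf_def by simp
  define u where "u = - Lf x y / (2 * (Gf x y + 1))"
  have "2 * (Gf x y + 1) > 0" using G by simp
  then have u: "u > 0" using L unfolding u_def by (intro divide_pos_pos) simp_all
  have "Gf x y * u \<le> (Gf x y + 1) * u" using u by simp
  also have "(Gf x y + 1) * u = - Lf x y / 2" using G unfolding u_def by (simp add: field_simps)
  finally have "Lf x y + Gf x y * u < 0" using L by linarith
  thus ?thesis using u by blast
qed

lemma G_part:
  fixes x y :: real
  assumes "x > 0" "y > 0" "(x, y) \<noteq> (1, 1)" "Gf x y \<ge> 0"
  shows "Lf x y < 0"
proof -
  have "x \<ge> y" using assms unfolding Gf_def by (simp add: divide_nonneg_pos zero_le_divide_iff)
  show ?thesis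
  proof (cases "x = y")
    case True
    then have "x \<noteq> 1" using assms by auto
    then have "(x-1)^2 > 0" by simp
    then show ?thesis using True assms unfolding Lf_def by (simp add: divide_neg_pos)
  next
    case False
    then have "y * (y - x) < 0" using \<open>x \<ge> y\<close> assms by (simp add: mult_pos_neg)
    then show ?thesis using assms unfolding Lf_def
      using zero_le_power2[of "x-1"] by (intro divide_neg_pos) linarith+
  qed
qed

lemma clf_part:
  "global_clf (\<lambda>(x, y). Vf x y) (\<lambda>(x, y). Lf x y) (\<lambda>(x, y). Gf x y)
         {z. fst z > 0 \<and> snd z > 0} (1, 1) {u. u > 0}"
proof -
  let ?D = "{z :: real \<times> real. fst z > 0 \<and> snd z > 0}"
  let ?V = "\<lambda>(x, y). Vf x y"
  have cont: "continuous_on K ?V" if "K \<subseteq> ?D" for K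
  proof -
    have "continuous_on K (\<lambda>z. Psi (1 / fst z) + Psi (snd z / fst z))"
      unfolding Psi_def using that
      by (auto intro!: continuous_intros)
    moreover have "?V = (\<lambda>z. Psi (1 / fst z) + Psi (snd z / fst z))"
      by (auto simp: Vf_def)
    ultimately show ?thesis by simp
  qed
  have pos: "\<forall>z\<in>?D. z \<noteq> (1,1) \<longrightarrow> ?V z > 0"
  proof (intro ballI impI)
    fix z :: "real \<times> real" assume hz: "z \<in> ?D" "z \<noteq> (1,1)"
    obtain x y where z: "z = (x, y)" by fastforce
    have h: "(x, y) \<in> ?D" "(x, y) \<noteq> (1,1)" using hz z by auto
    have a: "Psi (1/x) \<ge> 0" "Psi (y/x) \<ge> 0" using h by (auto intro!: Psi_nonneg)
    show "?V z > 0" unfolding z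
    proof (rule ccontr)
      assume "\<not> ?V (x, y) > 0"
      then have "Psi (1/x) = 0" "Psi (y/x) = 0" using a by (auto simp: Vf_def)
      moreover have "1/x > 0" "y/x > 0" using h by auto
      ultimately have "1/x = 1" "y/x = 1" using Psi_zero by blast+
      then show False using h by (auto simp: field_simps)
    qed
  qed
  have comp: "compact {z \<in> ?D. ?V z \<le> c}" for c
  proof (cases "c < 0")
    case True
    have "\<forall>z\<in>?D. ?V z > c"
    proof
      fix z :: "real \<times> real" assume hz: "z \<in> ?D"
      obtain x y where z: "z = (x, y)" by fastforce
      have "Psi (1/x) \<ge> 0" "Psi (y/x) \<ge> 0" using hz z by (auto intro!: Psi_nonneg)
      then show "?V z > c" using True z by (simp add: Vf_def)
    qed
    then have e: "{z \<in> ?D. ?V z \<le> c} = {}" by force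
    show ?thesis by (subst e) simp
  next
    case False
    define m where "m = exp (-1 - c)"
    define M where "M = 2 * (c + 1)"
    have m: "m > 0" and M: "M > 0" using False by (auto simp: m_def M_def)
    define K where "K = {1/M..1/m} \<times> {m/M..M/m}"
    have KD: "K \<subseteq> ?D"
    proof
      fix z :: "real \<times> real" assume "z \<in> K"
      then have "1/M \<le> fst z" "m/M \<le> snd z" by (auto simp: K_def mem_Times_iff)
      moreover have "1/M > 0" "m/M > 0" using m M by auto
      ultimately have "fst z > 0" "snd z > 0" by linarith+
      then show "z \<in> ?D" by simp
    qed
    have sub1: "\<forall>z\<in>?D. ?V z \<le> c \<longrightarrow> z \<in> K"
    proof (intro ballI impI)
      fix z :: "real \<times> real" assume hz: "z \<in> ?D" "?V z \<le> c"
      obtain x y where z: "z = (x, y)" by fastforce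
      have h: "(x, y) \<in> ?D" "?V (x, y) \<le> c" using hz z by auto
      have a: "Psi (1/x) \<ge> 0" "Psi (y/x) \<ge> 0" using h by (auto intro!: Psi_nonneg)
      have p1: "Psi (1/x) \<le> c" "Psi (y/x) \<le> c" using h a by (auto simp: Vf_def)
      have hx: "x > 0" "y > 0" using h by auto
      have b1: "m \<le> 1/x" "1/x \<le> M" using Psi_lower[OF _ p1(1)] Psi_upper[OF _ p1(1)] hx
        by (auto simp: m_def M_def)
      have b2: "m \<le> y/x" "y/x \<le> M" using Psi_lower[OF _ p1(2)] Psi_upper[OF _ p1(2)] hx
        by (auto simp: m_def M_def)
      have x1: "1/M \<le> x" "x \<le> 1/m" using b1 hx m M by (auto simp: field_simps)
      have y1: "m * x \<le> y" "y \<le> M * x" using b2 hx by (auto simp: field_simps)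
      have "m / M \<le> m * x" using x1 m M by (simp add: field_simps)
      moreover have "M * x \<le> M / m" using x1 m M by (simp add: field_simps)
      ultimately have "m / M \<le> y" "y \<le> M / m" using y1 by auto
      then show "z \<in> K" using x1 z by (simp add: K_def)
    qed
    have sub: "{z \<in> ?D. ?V z \<le> c} = K \<inter> (K \<inter> ?V -` {..c})"
      using sub1 KD by blast
    have cK: "compact K" unfolding K_def by (intro compact_Times compact_Icc)
    have "closed (K \<inter> ?V -` {..c})"
      using iffD1[OF continuous_on_closed_vimage[OF compact_imp_closed[OF cK]] cont[OF KD], rule_format, OF closed_atMost, of c]
      by (simp add: Int_commute)
    then show ?thesis unfolding sub using cK by (rule compact_Int_closed[rotated])
  qed
  show ?thesis unfolding global_clf_def
  proof (intro conjI)
    show "?V (1,1) = 0" by (simp add: Vf_def Psi_def)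
    show "\<forall>z\<in>?D. z \<noteq> (1, 1) \<longrightarrow> (\<exists>u\<in>{u. u > 0}. (\<lambda>(x, y). Lf x y) z + (\<lambda>(x, y). Gf x y) z * u < 0)"
    proof (intro ballI impI)
      fix z :: "real \<times> real" assume hz: "z \<in> ?D" "z \<noteq> (1,1)"
      obtain x y where z: "z = (x, y)" by fastforce
      obtain u where "u > 0" "Lf x y + Gf x y * u < 0" using exists_part[of x y] hz z by auto
      then show "\<exists>u\<in>{u. u > 0}. (\<lambda>(x, y). Lf x y) z + (\<lambda>(x, y). Gf x y) z * u < 0"
        using z by auto
    qed
    show "(1::real, 1::real) \<in> ?D" by simp
    show "continuous_on ?D ?V" by (rule cont[OF order_refl])
    show "\<forall>z\<in>?D. z \<noteq> (1, 1) \<longrightarrow> ?V z > 0" by (rule pos)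
    show "\<forall>c. compact {z \<in> ?D. ?V z \<le> c}" using comp by blast
  qed
qed

theorem mainTheorem6:
  shows
   "(\<forall>(X :: real \<Rightarrow> real) (Y :: real \<Rightarrow> real) (U :: real \<Rightarrow> real) t.
       X t > 0 \<longrightarrow> Y t > 0 \<longrightarrow>
       (X has_real_derivative ((1 - Y t) * X t)) (at t) \<longrightarrow>
       (Y has_real_derivative ((X t - U t) * Y t)) (at t) \<longrightarrow>
       ((\<lambda>s. Vf (X s) (Y s)) has_real_derivative
          (Lf (X t) (Y t) + Gf (X t) (Y t) * U t)) (at t))
    \<and> (\<forall>x y :: real. x > 0 \<longrightarrow> y > 0 \<longrightarrow> (x, y) \<noteq> (1, 1) \<longrightarrow>
         (\<exists>u > 0. Lf x y + Gf x y * u < 0))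
    \<and> (\<forall>x y :: real. x > 0 \<longrightarrow> y > 0 \<longrightarrow> (x, y) \<noteq> (1, 1) \<longrightarrow> Gf x y \<ge> 0 \<longrightarrow>
         Lf x y < 0)
    \<and> global_clf (\<lambda>(x, y). Vf x y) (\<lambda>(x, y). Lf x y) (\<lambda>(x, y). Gf x y)
         {z. fst z > 0 \<and> snd z > 0} (1, 1) {u. u > 0}"
  apply (intro conjI allI impI)
     apply (rule deriv_part; assumption)
    apply (rule exists_part; assumption)
   apply (rule G_part; assumption)
  apply (rule clf_part)
  done

end
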